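(* Let $N\to\infty$, let $n=n(N)\ge 2$ be an integer, and let $p=p(N)$ satisfy $p N^2\to\infty$ (i.e. $\frac{1}{N^2}\ll p$) and $p\le \frac1N$. Then asymptotically almost surely $\mathrm{ex}(G(N,p),P_{n+1})=\Theta(pN^2)$, i.e. there are absolute constants $c_1,c_2>0$ such that a.a.s. $c_1pN^2\le \mathrm{ex}(G(N,p),P_{n+1})\le c_2pN^2$. In particular, a.a.s. $\mathrm{ex}(G(N,1/N),P_{n+1})\ge N/15$.
   Context: $G(N,p)$ denotes the Erdős–Rényi random graph on vertex set $[N]=\{1,\dots,N\}$ in which each pair is an edge independently with probability $p$. $P_k$ denotes the path on $k$ vertices. For graphs $G,F$, $\mathrm{ex}(G,F)$ is the maximum number of edges in an $F$-free subgraph of $G$. An event holds asymptotically almost surely (a.a.s.) if its probability tends to $1$ as $N\to\infty$. *)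

theory Defs
  imports "HOL-Analysis.Analysis"
begin

text \<open>Graphs on vertex set [N] = {1..N} are given by their edge sets: sets of
  2-element subsets of {1..N}.\<close>

definition all_edges :: "nat \<Rightarrow> nat set set" where
  "all_edges N = {e. e \<subseteq> {1..N} \<and> card e = 2}"

definition gnp_prob :: "nat \<Rightarrow> real \<Rightarrow> (nat set set \<Rightarrow> bool) \<Rightarrow> real" where
  "gnp_prob N p P =
     (\<Sum>E\<in>Pow (all_edges N).
        if P E then p ^ card E * (1 - p) ^ (card (all_edges N) - card E) else 0)"

definition contains_path :: "nat set set \<Rightarrow> nat \<Rightarrow> bool" where
  "contains_path H k \<longleftrightarrow>
     (\<exists>vs. length vs = k \<and> distinct vs \<and> (\<forall>i. i + 1 < k \<longrightarrow> {vs ! i, vs ! (i + 1)} \<in> H))"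

definition ex_path :: "nat set set \<Rightarrow> nat \<Rightarrow> nat" where
  "ex_path E k = Max {card H | H. H \<subseteq> E \<and> \<not> contains_path H k}"

end

theory Submission
  imports Defs
begin


lemma finite_all_edges: "finite (all_edges N)"
proof -
  have "all_edges N \<subseteq> Pow {1..N}" unfolding all_edges_def by auto
  thus ?thesis by (rule finite_subset) simp
qed

definition gexp :: "nat \<Rightarrow> real \<Rightarrow> (nat set set \<Rightarrow> real) \<Rightarrow> real" where
  "gexp N p f = (\<Sum>E\<in>Pow (all_edges N). p ^ card E * (1 - p) ^ (card (all_edges N) - card E) * f E)"

lemma gnp_prob_gexp: "gnp_prob N p P = gexp N p (\<lambda>E. if P E then 1 else 0)"
  unfolding gnp_prob_def gexp_def by (rule sum.cong) auto

lemma sum_pow_binom: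
  assumes "finite V"
  shows "(\<Sum>F\<in>Pow V. p ^ card F * q ^ (card V - card F)) = ((p::real) + q) ^ card V"
proof -
  have "((p::real) + q) ^ card V = (\<Prod>x\<in>V. p + q)" by simp
  also have "\<dots> = (\<Sum>X\<in>Pow V. (\<Prod>x\<in>X. p) * (\<Prod>x\<in>V-X. q))" by (rule prod_add[OF assms])
  also have "\<dots> = (\<Sum>F\<in>Pow V. p ^ card F * q ^ (card V - card F))"
    apply (rule sum.cong, simp)
    using assms by (simp add: card_Diff_subset finite_subset)
  finally show ?thesis by simp
qed

lemma gexp_subset:
  assumes S: "S \<subseteq> all_edges N"
  shows "gexp N p (\<lambda>E. if S \<subseteq> E then 1 else 0) = p ^ card S"
proof -
  let ?U = "all_edges N"
  let ?V = "?U - S"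
  let ?w = "\<lambda>E. p ^ card E * (1 - p) ^ (card ?U - card E)"
  have fU: "finite ?U" by (rule finite_all_edges)
  have fS: "finite S" using S fU finite_subset by blast
  have fV: "finite ?V" using fU by simp
  have "gexp N p (\<lambda>E. if S \<subseteq> E then 1 else 0) = (\<Sum>E\<in>{E\<in>Pow ?U. S \<subseteq> E}. ?w E)"
    unfolding gexp_def by (simp add: sum.inter_filter[symmetric, OF finite_Pow_iff[THEN iffD2, OF fU]] if_distrib cong: if_cong)
  also have "{E\<in>Pow ?U. S \<subseteq> E} = (\<lambda>F. F \<union> S) ` Pow ?V"
    using S by (auto simp: image_def intro!: exI[where x="_ - S"])
  also have "(\<Sum>E\<in>(\<lambda>F. F \<union> S) ` Pow ?V. ?w E) = (\<Sum>F\<in>Pow ?V. ?w (F \<union> S))"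
    by (subst sum.reindex) (auto simp: inj_on_def)
  also have "\<dots> = (\<Sum>F\<in>Pow ?V. p ^ card S * (p ^ card F * (1 - p) ^ (card ?V - card F)))"
  proof (rule sum.cong)
    fix F assume F: "F \<in> Pow ?V"
    have fF: "finite F" using F fV finite_subset by auto
    have c1: "card (F \<union> S) = card F + card S" using F fF fS by (subst card_Un_disjoint) auto
    have c2: "card ?V = card ?U - card S" using S fS by (simp add: card_Diff_subset)
    have c3: "card F \<le> card ?V" using F fV by (simp add: card_mono)
    have c4: "card S \<le> card ?U" using S fU by (simp add: card_mono)
    have "card ?U - card (F \<union> S) = card ?V - card F" using c1 c2 c3 c4 by simp
    thus "?w (F \<union> S) = p ^ card S * (p ^ card F * (1 - p) ^ (card ?V - card F))"
      using c1 by (simp add: power_add)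
  qed simp
  also have "\<dots> = p ^ card S" by (simp add: sum_distrib_left[symmetric] sum_pow_binom[OF fV])
  finally show ?thesis .
qed

lemma gexp_one: "gexp N p (\<lambda>E. 1) = 1"
  using gexp_subset[of "{}" N p] by simp

lemma gexp_add: "gexp N p (\<lambda>E. f E + g E) = gexp N p f + gexp N p g"
  unfolding gexp_def by (simp add: algebra_simps sum.distrib)

lemma gexp_cmult: "gexp N p (\<lambda>E. c * f E) = c * gexp N p f"
  unfolding gexp_def by (simp add: sum_distrib_left algebra_simps)

lemma gexp_diff: "gexp N p (\<lambda>E. f E - g E) = gexp N p f - gexp N p g"
  unfolding gexp_def by (simp add: algebra_simps sum_subtractf)

lemma gexp_sum: "finite I \<Longrightarrow> gexp N p (\<lambda>E. \<Sum>i\<in>I. f i E) = (\<Sum>i\<in>I. gexp N p (f i))"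
  unfolding gexp_def by (simp add: sum_distrib_left sum.swap[of _ I])

lemma p_range: "0 \<le> p \<Longrightarrow> p \<le> 1 / real N \<Longrightarrow> p \<le> 1"
proof (cases N)
  case (Suc n)
  assume "p \<le> 1 / real N"
  moreover have "1 / real N \<le> 1" using Suc by (simp add: divide_le_eq)
  ultimately show ?thesis by linarith
qed auto

lemma gexp_mono:
  assumes "0 \<le> p" "p \<le> 1" "\<And>E. E \<subseteq> all_edges N \<Longrightarrow> f E \<le> g E"
  shows "gexp N p f \<le> gexp N p g"
  unfolding gexp_def using assms by (intro sum_mono mult_left_mono) auto

lemma prob_mono:
  assumes "0 \<le> p" "p \<le> 1" "\<And>E. E \<subseteq> all_edges N \<Longrightarrow> P E \<Longrightarrow> Q E"
  shows "gnp_prob N p P \<le> gnp_prob N p Q"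
  unfolding gnp_prob_gexp using assms by (intro gexp_mono) auto

lemma prob_compl: "gnp_prob N p P = 1 - gnp_prob N p (\<lambda>E. \<not> P E)"
proof -
  have "gnp_prob N p P + gnp_prob N p (\<lambda>E. \<not> P E) = gexp N p (\<lambda>E. 1)"
    unfolding gnp_prob_gexp gexp_add[symmetric] by (rule arg_cong[where f="gexp N p"]) auto
  thus ?thesis using gexp_one by simp
qed

lemma prob_union:
  assumes "0 \<le> p" "p \<le> 1"
  shows "gnp_prob N p (\<lambda>E. P E \<or> Q E) \<le> gnp_prob N p P + gnp_prob N p Q"
  unfolding gnp_prob_gexp gexp_add[symmetric] using assms by (intro gexp_mono) auto

lemma markov:
  assumes "0 \<le> p" "p \<le> 1" "t > 0" "\<And>E. E \<subseteq> all_edges N \<Longrightarrow> f E \<ge> 0"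
  shows "gnp_prob N p (\<lambda>E. t \<le> f E) \<le> gexp N p f / t"
proof -
  have "gnp_prob N p (\<lambda>E. t \<le> f E) \<le> gexp N p (\<lambda>E. (1/t) * f E)"
    unfolding gnp_prob_gexp using assms by (intro gexp_mono) (auto simp: field_simps)
  thus ?thesis using gexp_cmult[of N p "1/t" f] by simp
qed

lemma chebyshev:
  assumes "0 \<le> p" "p \<le> 1" "t > 0"
  shows "gnp_prob N p (\<lambda>E. t \<le> \<bar>f E - \<mu>\<bar>) \<le> gexp N p (\<lambda>E. (f E - \<mu>)^2) / t^2"
proof -
  have "gnp_prob N p (\<lambda>E. t \<le> \<bar>f E - \<mu>\<bar>) \<le> gnp_prob N p (\<lambda>E. t^2 \<le> (f E - \<mu>)^2)"
  proof (intro prob_mono)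
    fix E assume "t \<le> \<bar>f E - \<mu>\<bar>"
    hence "t^2 \<le> \<bar>f E - \<mu>\<bar>^2" using assms by (intro power_mono) auto
    thus "t^2 \<le> (f E - \<mu>)^2" by simp
  qed (use assms in auto)
  also have "\<dots> \<le> gexp N p (\<lambda>E. (f E - \<mu>)^2) / t^2"
    using assms by (intro markov) auto
  finally show ?thesis .
qed

lemma moment2:
  assumes I: "finite I" and S: "\<And>i. i \<in> I \<Longrightarrow> S i \<subseteq> all_edges N"
  shows "gexp N p (\<lambda>E. ((\<Sum>i\<in>I. if S i \<subseteq> E then 1 else 0) - (\<Sum>i\<in>I. p ^ card (S i)))^2)
    = (\<Sum>i\<in>I. \<Sum>j\<in>I. p ^ card (S i \<union> S j) - p ^ card (S i) * p ^ card (S j))"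
proof -
  define \<mu> where "\<mu> = (\<Sum>i\<in>I. p ^ card (S i))"
  define X where "X = (\<lambda>E. (\<Sum>i\<in>I. if S i \<subseteq> E then 1 else (0::real)))"
  have EX: "gexp N p X = \<mu>"
    unfolding X_def \<mu>_def by (simp add: gexp_sum[OF I] gexp_subset S)
  have sq: "\<And>E. (X E)^2 = (\<Sum>i\<in>I. \<Sum>j\<in>I. if S i \<union> S j \<subseteq> E then 1 else 0)"
    unfolding X_def power2_eq_square sum_product by (intro sum.cong refl) auto
  have EX2: "gexp N p (\<lambda>E. (X E)^2) = (\<Sum>i\<in>I. \<Sum>j\<in>I. p ^ card (S i \<union> S j))"
    unfolding sq gexp_sum[OF I] by (intro sum.cong refl gexp_subset) (use S in auto)
  have "(\<lambda>E. (X E - \<mu>)^2) = (\<lambda>E. (X E)^2 - (2 * \<mu> * X E - \<mu>^2 * 1))"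
    by (auto simp: power2_eq_square algebra_simps)
  hence "gexp N p (\<lambda>E. (X E - \<mu>)^2) = gexp N p (\<lambda>E. (X E)^2) - (2 * \<mu> * gexp N p X - \<mu>^2 * gexp N p (\<lambda>E. 1))"
    by (simp only: gexp_diff gexp_cmult)
  also have "\<dots> = (\<Sum>i\<in>I. \<Sum>j\<in>I. p ^ card (S i \<union> S j)) - \<mu>^2"
    using EX EX2 gexp_one by (simp add: power2_eq_square)
  also have "\<mu>^2 = (\<Sum>i\<in>I. \<Sum>j\<in>I. p ^ card (S i) * p ^ card (S j))"
    unfolding \<mu>_def power2_eq_square sum_product ..
  finally show ?thesis unfolding X_def \<mu>_def by (simp add: sum_subtractf)
qed

lemma var_bound:
  assumes I: "finite I" and S: "\<And>i. i \<in> I \<Longrightarrow> S i \<subseteq> all_edges N" and p: "0 \<le> p"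
  shows "gexp N p (\<lambda>E. ((\<Sum>i\<in>I. if S i \<subseteq> E then 1 else 0) - (\<Sum>i\<in>I. p ^ card (S i)))^2)
    \<le> (\<Sum>i\<in>I. \<Sum>j\<in>I. if S i \<inter> S j = {} then 0 else p ^ card (S i \<union> S j))"
proof -
  have "(\<Sum>i\<in>I. \<Sum>j\<in>I. p ^ card (S i \<union> S j) - p ^ card (S i) * p ^ card (S j))
     \<le> (\<Sum>i\<in>I. \<Sum>j\<in>I. if S i \<inter> S j = {} then 0 else p ^ card (S i \<union> S j))"
  proof (rule sum_mono, rule sum_mono)
    fix i j assume ij: "i \<in> I" "j \<in> I"
    have fi: "finite (S i)" "finite (S j)" using S[OF ij(1)] S[OF ij(2)] finite_all_edges finite_subset by blast+
    show "p ^ card (S i \<union> S j) - p ^ card (S i) * p ^ card (S j)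
           \<le> (if S i \<inter> S j = {} then 0 else p ^ card (S i \<union> S j))"
      using fi p by (auto simp: card_Un_disjoint power_add)
  qed
  thus ?thesis using moment2[where I=I and S=S and N=N and p=p, OF I S] by linarith
qed



definition pairs2 :: "nat set \<Rightarrow> nat set set" where
  "pairs2 A = {e. e \<subseteq> A \<and> card e = 2}"

definition cher :: "nat set \<Rightarrow> (nat \<times> nat set) set" where
  "cher A = Sigma A (\<lambda>v. pairs2 (A - {v}))"

definition Sc :: "nat \<times> nat set \<Rightarrow> nat set set" where
  "Sc c = (\<lambda>t. {fst c, t}) ` snd c"

lemma sum_ind_card: "finite I \<Longrightarrow> (\<Sum>i\<in>I. if P i then 1 else 0 :: real) = real (card {i\<in>I. P i})"
  by (simp add: sum.If_cases Int_def)

lemma card_doubleton: "a \<noteq> b \<Longrightarrow> card {a, b} = 2" by simp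

lemma pairs2_sub: "A \<subseteq> {1..N} \<Longrightarrow> pairs2 A \<subseteq> all_edges N"
  unfolding pairs2_def all_edges_def by auto

lemma finite_pairs2: "finite A \<Longrightarrow> finite (pairs2 A)"
  unfolding pairs2_def by (rule finite_subset[of _ "Pow A"]) auto

lemma card_pairs2: "finite A \<Longrightarrow> card (pairs2 A) = card A choose 2"
  unfolding pairs2_def by (rule n_subsets)

lemma finite_cher: "finite A \<Longrightarrow> finite (cher A)"
  unfolding cher_def by (auto intro: finite_pairs2)

lemma card_cher: "finite A \<Longrightarrow> card (cher A) = card A * (card A - 1 choose 2)"
proof -
  assume f: "finite A"
  have "card (cher A) = (\<Sum>v\<in>A. card (pairs2 (A - {v})))"
    unfolding cher_def using f by (simp add: finite_pairs2)
  also have "\<dots> = (\<Sum>v\<in>A. card A - 1 choose 2)"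
    using f by (intro sum.cong refl) (simp add: card_pairs2)
  finally show ?thesis by simp
qed

lemma cher_mem: "c \<in> cher A \<Longrightarrow> fst c \<in> A \<and> snd c \<subseteq> A \<and> fst c \<notin> snd c \<and> card (snd c) = 2"
  unfolding cher_def pairs2_def by auto

lemma Sc_sub: assumes "c \<in> cher A" shows "Sc c \<subseteq> pairs2 A"
proof -
  have "\<And>t. t \<in> snd c \<Longrightarrow> t \<noteq> fst c" using cher_mem[OF assms] by auto
  hence "\<And>t. t \<in> snd c \<Longrightarrow> card {fst c, t} = 2" by (metis card_doubleton)
  thus ?thesis using cher_mem[OF assms] unfolding Sc_def pairs2_def by auto
qed

lemma card_Sc: assumes "c \<in> cher A" shows "card (Sc c) = 2"
proof -
  have "inj_on (\<lambda>t. {fst c, t}) (snd c)" using cher_mem[OF assms]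
    by (auto simp: inj_on_def doubleton_eq_iff)
  moreover have "\<forall>t\<in>snd c. t \<noteq> fst c" using cher_mem[OF assms] by auto
  ultimately show ?thesis unfolding Sc_def using cher_mem[OF assms] by (simp add: card_image)
qed

lemma Sc_inj: assumes "c \<in> cher A" "c' \<in> cher A" "Sc c = Sc c'" shows "c = c'"
proof -
  obtain v T where c: "c = (v, T)" by fastforce
  obtain v' T' where c': "c' = (v', T')" by fastforce
  from cher_mem[OF assms(1)] obtain a b where T: "T = {a,b}" "a \<noteq> b" "v \<noteq> a" "v \<noteq> b"
    unfolding c by (auto simp: card_2_iff)
  from cher_mem[OF assms(2)] obtain a' b' where T': "T' = {a',b'}" "a' \<noteq> b'" "v' \<noteq> a'" "v' \<noteq> b'"
    unfolding c' by (auto simp: card_2_iff)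
  have eq: "{{v,a},{v,b}} = {{v',a'},{v',b'}}" using assms(3) unfolding c c' Sc_def T T' by simp
  have "\<Inter>{{v,a},{v,b}} = {v}" using T by auto
  moreover have "\<Inter>{{v',a'},{v',b'}} = {v'}" using T' by auto
  ultimately have vv: "v = v'" using eq by simp
  have e1: "\<Union>{{v,a},{v,b}} - {v} = T" using T by auto
  have e2: "\<Union>{{v',a'},{v',b'}} - {v'} = T'" using T' by auto
  have "T = T'" using e1 e2 eq vv by metis
  thus ?thesis using c c' vv by simp
qed



lemma card_meet:
  assumes A: "finite A" and c: "c \<in> cher A"
  shows "card {c'\<in>cher A. Sc c \<inter> Sc c' \<noteq> {}} \<le> 4 * card A"
proof -
  let ?D = "(SIGMA e:Sc c. e) \<times> A"
  let ?f = "\<lambda>((e, v'), z). (v', (e - {v'}) \<union> {z})"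
  have cS: "\<And>e. e \<in> Sc c \<Longrightarrow> card e = 2" using Sc_sub[OF c] unfolding pairs2_def by auto
  have fS: "finite (Sc c)" using card_Sc[OF c] by (metis card.infinite zero_neq_numeral)
  have fe: "\<And>e. e \<in> Sc c \<Longrightarrow> finite e" using cS by (metis card.infinite zero_neq_numeral)
  have "card (SIGMA e:Sc c. e) = (\<Sum>e\<in>Sc c. card e)" using fS fe by simp
  also have "\<dots> = (\<Sum>e\<in>Sc c. 2)" using cS by simp
  also have "\<dots> = 4" using card_Sc[OF c] by simp
  finally have cD: "card ?D = 4 * card A" by (simp add: card_cartesian_product)
  have "{c'\<in>cher A. Sc c \<inter> Sc c' \<noteq> {}} \<subseteq> ?f ` ?D"
  proof
    fix c' assume "c' \<in> {c'\<in>cher A. Sc c \<inter> Sc c' \<noteq> {}}"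
    hence c': "c' \<in> cher A" and ne: "Sc c \<inter> Sc c' \<noteq> {}" by auto
    obtain v' T' where cc: "c' = (v', T')" by fastforce
    from ne obtain e where e1: "e \<in> Sc c" and e2: "e \<in> Sc c'" by auto
    from e2 obtain w where w: "w \<in> T'" "e = {v', w}" unfolding Sc_def cc by auto
    from cher_mem[OF c'] have m: "v' \<in> A" "T' \<subseteq> A" "v' \<notin> T'" "card T' = 2" unfolding cc by auto
    obtain z where z: "T' = {w, z}"
      using m(4) w(1) by (metis card_2_iff insert_commute singletonD insertE)
    have zA: "z \<in> A" using z m(2) by auto
    have wv: "w \<noteq> v'" using w m by auto
    have "e - {v'} = {w}" using w wv by auto
    hence "?f ((e, v'), z) = c'" using cc z by auto
    moreover have "((e, v'), z) \<in> ?D" using e1 w zA by auto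
    ultimately show "c' \<in> ?f ` ?D" by force
  qed
  hence "card {c'\<in>cher A. Sc c \<inter> Sc c' \<noteq> {}} \<le> card (?f ` ?D)"
    by (intro card_mono) (auto intro!: finite_imageI simp: fS fe A)
  also have "\<dots> \<le> card ?D" by (rule card_image_le) (auto simp: fS fe A)
  finally show ?thesis using cD by simp
qed

lemma var_Q:
  fixes p :: real
  assumes A: "finite A" "A \<subseteq> {1..N}" and p: "0 \<le> p" "p \<le> 1"
  shows "gexp N p (\<lambda>E. ((\<Sum>c\<in>cher A. if Sc c \<subseteq> E then 1 else 0) - (\<Sum>c\<in>cher A. p ^ card (Sc c)))^2)
    \<le> card (cher A) * (p^2 + 4 * card A * p^3)"
proof -
  have S: "\<And>c. c \<in> cher A \<Longrightarrow> Sc c \<subseteq> all_edges N" using Sc_sub pairs2_sub[OF A(2)] by blast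
  have fin: "finite (cher A)" using finite_cher[OF A(1)] .
  have "gexp N p (\<lambda>E. ((\<Sum>c\<in>cher A. if Sc c \<subseteq> E then 1 else 0) - (\<Sum>c\<in>cher A. p ^ card (Sc c)))^2)
    \<le> (\<Sum>c\<in>cher A. \<Sum>c'\<in>cher A. if Sc c \<inter> Sc c' = {} then 0 else p ^ card (Sc c \<union> Sc c'))"
    by (rule var_bound[where S=Sc and I="cher A"]) (use fin S p in auto)
  also have "\<dots> \<le> (\<Sum>c\<in>cher A. p^2 + 4 * card A * p^3)"
  proof (rule sum_mono)
    fix c assume c: "c \<in> cher A"
    let ?D = "{c'\<in>cher A. Sc c \<inter> Sc c' \<noteq> {}}"
    have "(\<Sum>c'\<in>cher A. if Sc c \<inter> Sc c' = {} then 0 else p ^ card (Sc c \<union> Sc c'))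
        = (\<Sum>c'\<in>?D. p ^ card (Sc c \<union> Sc c'))"
      using fin by (simp add: sum.If_cases Int_def Collect_neg_eq[symmetric] cong: conj_cong)
    also have "\<dots> \<le> (\<Sum>c'\<in>?D. (if c' = c then p^2 else 0) + p^3)"
    proof (rule sum_mono)
      fix c' assume c': "c' \<in> ?D"
      have cc': "c' \<in> cher A" using c' by auto
      have f1: "finite (Sc c)" "finite (Sc c')" using card_Sc[OF c] card_Sc[OF cc']
        by (metis card.infinite zero_neq_numeral)+
      show "p ^ card (Sc c \<union> Sc c') \<le> (if c' = c then p^2 else 0) + p^3"
      proof (cases "c' = c")
        case True
        thus ?thesis using card_Sc[OF c] p by simp
      next
        case False
        have "card (Sc c) \<le> card (Sc c \<union> Sc c')" using f1 by (intro card_mono) auto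
        moreover have "card (Sc c \<union> Sc c') \<noteq> 2"
        proof
          assume h: "card (Sc c \<union> Sc c') = 2"
          have "Sc c = Sc c \<union> Sc c'" using f1 h card_Sc[OF c] by (intro card_subset_eq) auto
          moreover have "Sc c' = Sc c \<union> Sc c'" using f1 h card_Sc[OF cc'] by (intro card_subset_eq) auto
          ultimately have "c = c'" using Sc_inj[OF c cc'] by simp
          thus False using False by simp
        qed
        ultimately have "3 \<le> card (Sc c \<union> Sc c')" using card_Sc[OF c] by simp
        hence "p ^ card (Sc c \<union> Sc c') \<le> p^3" using p by (intro power_decreasing) auto
        thus ?thesis using False by simp
      qed
    qed
    also have "\<dots> = p^2 + card ?D * p^3"
    proof -
      have "c \<in> ?D" using c card_Sc[OF c] by auto
      hence "(\<Sum>c'\<in>?D. (if c' = c then p^2 else 0)) = p^2"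
        using fin by (simp add: sum.delta)
      thus ?thesis by (simp add: sum.distrib)
    qed
    also have "\<dots> \<le> p^2 + 4 * card A * p^3"
      using card_meet[OF A(1) c] p by (simp add: mult_right_mono)
    finally show "(\<Sum>c'\<in>cher A. if Sc c \<inter> Sc c' = {} then 0 else p ^ card (Sc c \<union> Sc c'))
        \<le> p^2 + 4 * card A * p^3" .
  qed
  also have "\<dots> = card (cher A) * (p^2 + 4 * card A * p^3)" by simp
  finally show ?thesis .
qed

lemma var_L:
  fixes p :: real
  assumes A: "finite A" "A \<subseteq> {1..N}" and p: "0 \<le> p" "p \<le> 1"
  shows "gexp N p (\<lambda>E. ((\<Sum>e\<in>pairs2 A. if {e} \<subseteq> E then 1 else 0) - (\<Sum>e\<in>pairs2 A. p ^ card {e}))^2)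
    \<le> card (pairs2 A) * p"
proof -
  have S: "\<And>e. e \<in> pairs2 A \<Longrightarrow> {e} \<subseteq> all_edges N" using pairs2_sub[OF A(2)] by blast
  have fin: "finite (pairs2 A)" using finite_pairs2[OF A(1)] .
  have "gexp N p (\<lambda>E. ((\<Sum>e\<in>pairs2 A. if {e} \<subseteq> E then 1 else 0) - (\<Sum>e\<in>pairs2 A. p ^ card {e}))^2)
    \<le> (\<Sum>e\<in>pairs2 A. \<Sum>e'\<in>pairs2 A. if {e} \<inter> {e'} = {} then 0 else p ^ card ({e} \<union> {e'}))"
    by (rule var_bound[where S="\<lambda>e. {e}" and I="pairs2 A"]) (use fin S p in auto)
  also have "\<dots> = (\<Sum>e\<in>pairs2 A. \<Sum>e'\<in>pairs2 A. if e' = e then p else 0)"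
    by (intro sum.cong refl) auto
  also have "\<dots> = card (pairs2 A) * p" using fin by (simp add: sum.delta)
  finally show ?thesis .
qed

lemma matching_exists:
  assumes fE: "finite E" and k: "3 \<le> k" and fA: "finite A"
  shows "\<exists>H\<subseteq>E. \<not> contains_path H k \<and> card (E \<inter> pairs2 A) - card {c\<in>cher A. Sc c \<subseteq> E} \<le> card H"
proof -
  define g where "g = (\<lambda>c::nat \<times> nat set. {fst c, Min (snd c)})"
  define B where "B = {c\<in>cher A. Sc c \<subseteq> E}"
  define H where "H = (E \<inter> pairs2 A) - g ` B"
  have fB: "finite B" unfolding B_def using finite_cher[OF fA] by simp
  have "card (E \<inter> pairs2 A) - card B \<le> card (E \<inter> pairs2 A) - card (g ` B)"
    using card_image_le[OF fB, of g] by linarith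
  also have "\<dots> \<le> card H" unfolding H_def by (rule diff_card_le_card_Diff) (use fB in simp)
  finally have cH: "card (E \<inter> pairs2 A) - card B \<le> card H" .
  have np: "\<not> contains_path H k"
  proof
    assume "contains_path H k"
    then obtain vs where vs: "length vs = k" "distinct vs" "\<And>i. i + 1 < k \<Longrightarrow> {vs ! i, vs ! (i + 1)} \<in> H"
      unfolding contains_path_def by blast
    define x where "x = vs ! 0"
    define y where "y = vs ! 1"
    define z where "z = vs ! 2"
    have e1: "{x, y} \<in> H" using vs(3)[of 0] k unfolding x_def y_def by simp
    have e2: "{y, z} \<in> H" using vs(3)[of 1] k unfolding z_def y_def by (simp add: numeral_2_eq_2)
    have xy: "x \<noteq> y" "y \<noteq> z" "x \<noteq> z"
      using vs(1,2) k unfolding x_def y_def z_def by (auto simp: nth_eq_iff_index_eq)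
    have inA: "x \<in> A" "y \<in> A" "z \<in> A" using e1 e2 unfolding H_def pairs2_def by auto
    define c where "c = (y, {x, z})"
    have cc: "c \<in> cher A" unfolding c_def cher_def pairs2_def using inA xy by auto
    have "Sc c = {{y, x}, {y, z}}" unfolding Sc_def c_def by auto
    hence "Sc c \<subseteq> E" using e1 e2 unfolding H_def by (auto simp: insert_commute)
    hence cB: "c \<in> B" unfolding B_def using cc by simp
    have "Min {x, z} = x \<or> Min {x, z} = z" by (simp add: min_def)
    hence "g c = {x, y} \<or> g c = {y, z}" unfolding g_def c_def by (auto simp: insert_commute)
    moreover have "g c \<notin> H" unfolding H_def using cB by auto
    ultimately show False using e1 e2 by auto
  qed
  have "H \<subseteq> E" unfolding H_def by auto
  thus ?thesis using np cH unfolding B_def by blast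
qed

lemma ex_path_ge:
  assumes "finite E" "H \<subseteq> E" "\<not> contains_path H k"
  shows "card H \<le> ex_path E k"
  unfolding ex_path_def
proof (rule Max_ge)
  have "{card H |H. H \<subseteq> E \<and> \<not> contains_path H k} \<subseteq> card ` Pow E" by auto
  thus "finite {card H |H. H \<subseteq> E \<and> \<not> contains_path H k}" using assms(1) finite_subset by blast
qed (use assms in auto)

lemma ex_path_le:
  assumes "finite E" "2 \<le> k"
  shows "ex_path E k \<le> card E"
  unfolding ex_path_def
proof (rule Max.boundedI)
  have "{card H |H. H \<subseteq> E \<and> \<not> contains_path H k} \<subseteq> card ` Pow E" by auto
  thus "finite {card H |H. H \<subseteq> E \<and> \<not> contains_path H k}" using assms(1) finite_subset by blast
  have "\<not> contains_path {} k" unfolding contains_path_def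
  proof
    assume "\<exists>vs. length vs = k \<and> distinct vs \<and> (\<forall>i. i + 1 < k \<longrightarrow> {vs ! i, vs ! (i + 1)} \<in> {})"
    then obtain vs where "\<forall>i. i + 1 < k \<longrightarrow> {vs ! i, vs ! (i + 1)} \<in> ({}::nat set set)" by blast
    from this[rule_format, of 0] assms(2) show False by simp
  qed
  thus "{card H |H. H \<subseteq> E \<and> \<not> contains_path H k} \<noteq> {}" by blast
qed (use assms in \<open>auto intro: card_mono\<close>)



lemma choose2_real: "real (n choose 2) = real n * (real n - 1) / 2"
proof (induction n)
  case (Suc n)
  have "Suc n choose 2 = (n choose 2) + n" by (simp add: numeral_2_eq_2)
  thus ?case using Suc by (simp add: field_simps)
qed simp

lemma arith_main:
  fixes y p NN :: real
  assumes N: "175 \<le> NN" and y: "(2*NN - 2)/3 \<le> y" "y \<le> 2*NN/3" and p: "0 \<le> p" "p * NN \<le> 1"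
  shows "y * (y - 1) * p / 2 - y^3 * p^2 / 2 - 2 * (1/540) * (p * NN^2) \<ge> p * NN^2 / 15"
proof -
  have y0: "0 \<le> y" using y N by (simp add: field_simps)
  have yp: "y * p \<le> 2/3"
  proof -
    have "y * p \<le> (2*NN/3) * p" using y p by (intro mult_right_mono) auto
    also have "\<dots> = (2/3) * (p * NN)" by simp
    also have "\<dots> \<le> 2/3" using p by (simp add: mult.commute)
    finally show ?thesis .
  qed
  have "y^3 * p^2 / 2 = (y^2 * p / 2) * (y * p)" by (simp add: power2_eq_square power3_eq_cube)
  also have "\<dots> \<le> (y^2 * p / 2) * (2/3)" using yp y0 p by (intro mult_left_mono) auto
  finally have q: "y^3 * p^2 / 2 \<le> y^2 * p / 3" by simp
  have y2: "y^2 \<ge> ((2*NN - 2)/3)^2" using y N by (intro power_mono) auto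
  have key: "y^2/6 - y/2 \<ge> 19 * NN^2 / 270"
  proof -
    have "((2*NN - 2)/3)^2 = (4*NN^2 - 8*NN + 4)/9" by (simp add: power2_eq_square field_simps)
    hence "y^2/6 \<ge> (4*NN^2 - 8*NN + 4)/54" using y2 by simp
    moreover have "NN^2 - 130*NN + 20 \<ge> 0"
    proof -
      have "NN * (NN - 130) \<ge> 0" using N by simp
      thus ?thesis by (simp add: power2_eq_square algebra_simps)
    qed
    ultimately show ?thesis using y by (simp add: field_simps)
  qed
  have "p * (y^2/6 - y/2) \<ge> p * (19 * NN^2 / 270)" using key p by (intro mult_left_mono) auto
  thus ?thesis using q by (simp add: field_simps power2_eq_square)
qed

lemma all_edges_pairs2: "all_edges N = pairs2 {1..N}"
  unfolding all_edges_def pairs2_def by simp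

lemma main_fixed:
  fixes p :: real
  assumes N: "175 \<le> N" and p: "0 \<le> p" "p \<le> 1 / real N" and x: "0 < p * real N ^ 2" and k: "3 \<le> k"
  shows "gnp_prob N p (\<lambda>E. p * real N ^ 2 / 15 \<le> real (ex_path E k) \<and> real (ex_path E k) \<le> p * real N ^ 2)
     \<ge> 1 - (2 + 6 * 540^2) / (p * real N ^ 2)"
proof -
  define x where "x = p * real N ^ 2"
  have x0: "0 < x" using x unfolding x_def .
  have p1: "p \<le> 1" using p_range[OF p] .
  have pN: "p * real N \<le> 1" using p N by (simp add: field_simps)
  define m where "m = 2 * N div 3"
  define A where "A = {1..m}"
  have m1: "3 * m \<le> 2 * N" "2 * N \<le> 3 * m + 2" unfolding m_def by auto
  have m1r: "3 * real m \<le> 2 * real N" "2 * real N \<le> 3 * real m + 2" using m1 by linarith+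
  have mN: "m \<le> N" using m1 by linarith
  have m2: "2 \<le> m" using m1 N by linarith
  have fA: "finite A" and AN: "A \<subseteq> {1..N}" and cA: "card A = m" unfolding A_def using mN by auto
  have fN: "finite {1..N}" "{1..N::nat} \<subseteq> {1..N}" by auto
  define XA where "XA = (\<lambda>E. (\<Sum>e\<in>pairs2 {1..N}. if {e} \<subseteq> E then 1 else 0) :: real)"
  define muA where "muA = (\<Sum>e\<in>pairs2 {1..N}. p ^ card {e})"
  define XL where "XL = (\<lambda>E. (\<Sum>e\<in>pairs2 A. if {e} \<subseteq> E then 1 else 0) :: real)"
  define muL where "muL = (\<Sum>e\<in>pairs2 A. p ^ card {e})"
  define XQ where "XQ = (\<lambda>E. (\<Sum>c\<in>cher A. if Sc c \<subseteq> E then 1 else 0) :: real)"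
  define muQ where "muQ = (\<Sum>c\<in>cher A. p ^ card (Sc c))"
  have muA_eq: "muA = real (N choose 2) * p" unfolding muA_def by (simp add: card_pairs2)
  have muL_eq: "muL = real (m choose 2) * p" unfolding muL_def using fA cA by (simp add: card_pairs2)
  have muQ_eq: "muQ = real (card (cher A)) * p^2" unfolding muQ_def
    using card_Sc by (simp cong: sum.cong)
  have cher_le: "real (card (cher A)) \<le> real m ^ 3 / 2"
  proof -
    have "real (card (cher A)) = real m * real (m - 1 choose 2)" using card_cher[OF fA] cA by simp
    also have "real (m - 1 choose 2) = (real m - 1) * (real m - 2) / 2"
      using m2 by (simp add: choose2_real of_nat_diff)
    finally have "real (card (cher A)) = real m * ((real m - 1) * (real m - 2)) / 2" by simp
    also have "\<dots> \<le> real m * (real m * real m) / 2"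
      using m2 by (intro divide_right_mono mult_left_mono) (auto intro!: mult_mono)
    finally show ?thesis by (simp add: power3_eq_cube)
  qed
  have muA_le: "muA \<le> x / 2"
  proof -
    have "real (N choose 2) \<le> real N ^ 2 / 2" by (simp add: choose2_real power2_eq_square field_simps)
    hence "real (N choose 2) * p \<le> real N ^ 2 / 2 * p" using p by (intro mult_right_mono) auto
    thus ?thesis unfolding muA_eq x_def by (simp add: mult.commute)
  qed
  define P1 where "P1 = (\<lambda>E. x / 2 \<le> \<bar>XA E - muA\<bar>)"
  define P2 where "P2 = (\<lambda>E. x / 540 \<le> \<bar>XL E - muL\<bar>)"
  define P3 where "P3 = (\<lambda>E. x / 540 \<le> \<bar>XQ E - muQ\<bar>)"
  have b1: "gnp_prob N p P1 \<le> 2 / x"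
  proof -
    have v: "gexp N p (\<lambda>E. (XA E - muA)^2) \<le> real (card (pairs2 {1..N})) * p"
      unfolding XA_def muA_def by (rule var_L[OF fN p(1) p1])
    have "real (card (pairs2 {1..N})) * p = muA" unfolding muA_eq by (simp add: card_pairs2)
    hence v2: "gexp N p (\<lambda>E. (XA E - muA)^2) \<le> x / 2" using v muA_le by linarith
    have "gnp_prob N p P1 \<le> gexp N p (\<lambda>E. (XA E - muA)^2) / (x/2)^2"
      unfolding P1_def by (rule chebyshev) (use p p1 x0 in auto)
    also have "\<dots> \<le> (x/2) / (x/2)^2" using v2 x0 by (intro divide_right_mono) auto
    also have "\<dots> = 2 / x" using x0 by (simp add: power2_eq_square field_simps)
    finally show ?thesis .
  qed
  have b2: "gnp_prob N p P2 \<le> 540^2 / x"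
  proof -
    have v: "gexp N p (\<lambda>E. (XL E - muL)^2) \<le> real (card (pairs2 A)) * p"
      unfolding XL_def muL_def by (rule var_L[OF fA AN p(1) p1])
    have "real (card (pairs2 A)) * p \<le> x"
    proof -
      have mm: "real m * real m \<le> real N * real N" using mN by (intro mult_mono) auto
      have nn: "0 \<le> real N * real N" by simp
      have "real (card (pairs2 A)) = real m * (real m - 1) / 2" using fA cA by (simp add: card_pairs2 choose2_real)
      also have "\<dots> \<le> real N ^ 2"
      proof -
        have e: "real m * (real m - 1) = real m * real m - real m" by (simp add: algebra_simps)
        show ?thesis unfolding power2_eq_square using mm nn e of_nat_0_le_iff[of m] by linarith
      qed
      finally have "real (card (pairs2 A)) \<le> real N ^ 2" .
      hence "p * real (card (pairs2 A)) \<le> p * real N ^ 2" by (rule mult_left_mono) (use p in simp)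
      thus ?thesis unfolding x_def by (simp add: mult.commute)
    qed
    hence v2: "gexp N p (\<lambda>E. (XL E - muL)^2) \<le> x" using v by linarith
    have "gnp_prob N p P2 \<le> gexp N p (\<lambda>E. (XL E - muL)^2) / (x/540)^2"
      unfolding P2_def by (rule chebyshev) (use p p1 x0 in auto)
    also have "\<dots> \<le> x / (x/540)^2" using v2 x0 by (intro divide_right_mono) auto
    also have "\<dots> = 540^2 / x" using x0 by (simp add: power2_eq_square field_simps)
    finally show ?thesis .
  qed
  have b3: "gnp_prob N p P3 \<le> 5 * 540^2 / x"
  proof -
    have "gexp N p (\<lambda>E. (XQ E - muQ)^2) \<le> real (card (cher A)) * (p^2 + 4 * real (card A) * p^3)"
      unfolding XQ_def muQ_def using var_Q[OF fA AN p(1) p1] by simp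
    also have "\<dots> \<le> 5 * x"
    proof -
      have "real m * p \<le> real N * p" using mN p by (intro mult_right_mono) auto
      hence mp: "real m * p \<le> 1" using pN by (simp add: mult.commute)
      have "p^2 + 4 * real (card A) * p^3 = p^2 * (1 + 4 * (real m * p))" using cA
        by (simp add: power2_eq_square power3_eq_cube algebra_simps)
      also have "\<dots> \<le> p^2 * 5" using mp by (intro mult_left_mono) auto
      finally have h1: "p^2 + 4 * real (card A) * p^3 \<le> 5 * p^2" by simp
      have h2: "real (card (cher A)) \<le> real N ^ 3"
      proof -
        have a: "real m ^ 3 \<le> real N ^ 3" using mN by (intro power_mono) auto
        have b: "0 \<le> real m ^ 3" by simp
        show ?thesis using cher_le a b by linarith
      qed
      have "real (card (cher A)) * (p^2 + 4 * real (card A) * p^3) \<le> real N ^ 3 * (5 * p^2)"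
        using h1 h2 p by (intro mult_mono) auto
      also have "\<dots> = 5 * x * (p * real N)" unfolding x_def by (simp add: power2_eq_square power3_eq_cube)
      also have "\<dots> \<le> 5 * x * 1" using pN x0 p by (intro mult_left_mono) auto
      finally show ?thesis by simp
    qed
    finally have v2: "gexp N p (\<lambda>E. (XQ E - muQ)^2) \<le> 5 * x" .
    have "gnp_prob N p P3 \<le> gexp N p (\<lambda>E. (XQ E - muQ)^2) / (x/540)^2"
      unfolding P3_def by (rule chebyshev) (use p p1 x0 in auto)
    also have "\<dots> \<le> 5 * x / (x/540)^2" using v2 x0 by (intro divide_right_mono) auto
    also have "\<dots> = 5 * 540^2 / x" using x0 by (simp add: power2_eq_square field_simps)
    finally show ?thesis .
  qed
  have good: "p * real N ^ 2 / 15 \<le> real (ex_path E k) \<and> real (ex_path E k) \<le> p * real N ^ 2"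
    if E: "E \<subseteq> all_edges N" and nb: "\<not> (P1 E \<or> P2 E \<or> P3 E)" for E
  proof -
    have fE: "finite E" using E finite_all_edges finite_subset by blast
    have XA_E: "XA E = real (card E)"
    proof -
      have "XA E = real (card {e \<in> pairs2 {1..N}. {e} \<subseteq> E})"
        unfolding XA_def by (rule sum_ind_card) (simp add: finite_pairs2)
      also have "{e \<in> pairs2 {1..N}. {e} \<subseteq> E} = E" using E all_edges_pairs2 by auto
      finally show ?thesis .
    qed
    have up: "real (ex_path E k) \<le> x"
    proof -
      have "real (ex_path E k) \<le> real (card E)" using ex_path_le[OF fE] k by simp
      also have "\<dots> < muA + x / 2"
      proof -
        have "\<not> x / 2 \<le> \<bar>XA E - muA\<bar>" using nb unfolding P1_def by simp
        thus ?thesis using XA_E by linarith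
      qed
      also have "\<dots> \<le> x" using muA_le by simp
      finally show ?thesis by simp
    qed
    obtain H where H: "H \<subseteq> E" "\<not> contains_path H k"
      "card (E \<inter> pairs2 A) - card {c\<in>cher A. Sc c \<subseteq> E} \<le> card H"
      using matching_exists[OF fE k fA] by blast
    have XL_E: "XL E = real (card (E \<inter> pairs2 A))"
    proof -
      have "XL E = real (card {e \<in> pairs2 A. {e} \<subseteq> E})"
        unfolding XL_def by (rule sum_ind_card) (simp add: finite_pairs2 fA)
      also have "{e \<in> pairs2 A. {e} \<subseteq> E} = E \<inter> pairs2 A" by auto
      finally show ?thesis .
    qed
    have XQ_E: "XQ E = real (card {c\<in>cher A. Sc c \<subseteq> E})"
      unfolding XQ_def by (rule sum_ind_card) (simp add: finite_cher fA)
    have "card (E \<inter> pairs2 A) \<le> card H + card {c\<in>cher A. Sc c \<subseteq> E}" using H(3) by arith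
    hence "XL E - XQ E \<le> real (card H)" using XL_E XQ_E by linarith
    also have "\<dots> \<le> real (ex_path E k)" using ex_path_ge[OF fE H(1,2)] by simp
    finally have lo1: "XL E - XQ E \<le> real (ex_path E k)" .
    have "\<not> x / 540 \<le> \<bar>XL E - muL\<bar>" "\<not> x / 540 \<le> \<bar>XQ E - muQ\<bar>" using nb unfolding P2_def P3_def by simp_all
    hence "XL E > muL - x/540" "XQ E < muQ + x/540" by linarith+
    hence lo2: "muL - muQ - 2 * (1/540) * x < real (ex_path E k)" using lo1 by linarith
    have ar: "real m * (real m - 1) * p / 2 - real m ^ 3 * p^2 / 2 - 2 * (1/540) * (p * real N ^ 2) \<ge> p * real N ^ 2 / 15"
      by (rule arith_main) (use N m1r p pN in auto)
    have "muQ \<le> (real m ^ 3 / 2) * p^2" unfolding muQ_eq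
      by (rule mult_right_mono[OF cher_le]) simp
    moreover have "muL = real m * (real m - 1) * p / 2" unfolding muL_eq by (simp add: choose2_real)
    ultimately have "p * real N ^ 2 / 15 \<le> real (ex_path E k)" using ar lo2 unfolding x_def by (simp add: field_simps)
    thus ?thesis using up unfolding x_def by simp
  qed
  have "gnp_prob N p (\<lambda>E. \<not> (P1 E \<or> P2 E \<or> P3 E))
     \<le> gnp_prob N p (\<lambda>E. p * real N ^ 2 / 15 \<le> real (ex_path E k) \<and> real (ex_path E k) \<le> p * real N ^ 2)"
    by (rule prob_mono[OF p(1) p1]) (rule good, assumption+)
  moreover have "gnp_prob N p (\<lambda>E. \<not> (P1 E \<or> P2 E \<or> P3 E)) = 1 - gnp_prob N p (\<lambda>E. P1 E \<or> P2 E \<or> P3 E)"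
    using prob_compl[of N p "\<lambda>E. \<not> (P1 E \<or> P2 E \<or> P3 E)"] by (simp only: not_not)
  moreover have "gnp_prob N p (\<lambda>E. P1 E \<or> P2 E \<or> P3 E) \<le> gnp_prob N p P1 + (gnp_prob N p P2 + gnp_prob N p P3)"
    using prob_union[OF p(1) p1, where N=N and P=P1 and Q="\<lambda>E. P2 E \<or> P3 E"] prob_union[OF p(1) p1, where N=N and P=P2 and Q=P3] by linarith
  moreover have "2 / x + 540^2 / x + 5 * 540^2 / x = (2 + 6 * 540^2) / x" by (simp add: field_simps)
  ultimately show ?thesis using b1 b2 b3 unfolding x_def by linarith
qed



lemma prob_le1: "0 \<le> p \<Longrightarrow> p \<le> 1 \<Longrightarrow> gnp_prob N p P \<le> 1"
proof -
  assume p: "0 \<le> p" "p \<le> 1"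
  have "gnp_prob N p P \<le> gnp_prob N p (\<lambda>E. True)" by (rule prob_mono[OF p]) simp
  also have "\<dots> = 1" unfolding gnp_prob_gexp using gexp_one by simp
  finally show ?thesis .
qed

lemma limit_from_bound:
  fixes x :: "nat \<Rightarrow> real" and g :: "nat \<Rightarrow> real"
  assumes x: "filterlim x at_top sequentially"
    and ev: "eventually (\<lambda>N. 1 - K / x N \<le> g N \<and> g N \<le> 1) sequentially"
  shows "g \<longlonglongrightarrow> 1"
proof (rule tendsto_sandwich[where f="\<lambda>N. 1 - K / x N" and h="\<lambda>N. 1"])
  show "eventually (\<lambda>N. 1 - K / x N \<le> g N) sequentially" using ev by (rule eventually_mono) simp
  show "eventually (\<lambda>N. g N \<le> 1) sequentially" using ev by (rule eventually_mono) simp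
  have "(\<lambda>N. K * inverse (x N)) \<longlonglongrightarrow> K * 0"
    by (intro tendsto_mult tendsto_const tendsto_inverse_0_at_top x)
  hence "(\<lambda>N. 1 - K * inverse (x N)) \<longlonglongrightarrow> 1 - K * 0" by (intro tendsto_diff tendsto_const)
  thus "(\<lambda>N. 1 - K / x N) \<longlonglongrightarrow> 1" by (simp add: divide_inverse)
qed simp

theorem proposition1p3:
  shows
  "(\<exists>c1 c2 :: real. c1 > 0 \<and> c2 > 0 \<and>
     (\<forall>(n :: nat \<Rightarrow> nat) (p :: nat \<Rightarrow> real).
        (\<forall>N. n N \<ge> 2) \<and> (\<forall>N. 0 \<le> p N \<and> p N \<le> 1 / real N) \<and>
        filterlim (\<lambda>N. p N * real N ^ 2) at_top sequentially \<longrightarrow>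
        (\<lambda>N. gnp_prob N (p N)
               (\<lambda>E. c1 * p N * real N ^ 2 \<le> real (ex_path E (n N + 1)) \<and>
                    real (ex_path E (n N + 1)) \<le> c2 * p N * real N ^ 2))
          \<longlonglongrightarrow> 1))
   \<and>
   (\<forall>n :: nat \<Rightarrow> nat. (\<forall>N. n N \<ge> 2) \<longrightarrow>
      (\<lambda>N. gnp_prob N (1 / real N)
             (\<lambda>E. real (ex_path E (n N + 1)) \<ge> real N / 15))
        \<longlonglongrightarrow> 1)"
proof
  let ?K = "(2 + 6 * 540^2) :: real"
  show "\<exists>c1 c2 :: real. c1 > 0 \<and> c2 > 0 \<and>
     (\<forall>(n :: nat \<Rightarrow> nat) (p :: nat \<Rightarrow> real).
        (\<forall>N. n N \<ge> 2) \<and> (\<forall>N. 0 \<le> p N \<and> p N \<le> 1 / real N) \<and>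
        filterlim (\<lambda>N. p N * real N ^ 2) at_top sequentially \<longrightarrow>
        (\<lambda>N. gnp_prob N (p N)
               (\<lambda>E. c1 * p N * real N ^ 2 \<le> real (ex_path E (n N + 1)) \<and>
                    real (ex_path E (n N + 1)) \<le> c2 * p N * real N ^ 2))
          \<longlonglongrightarrow> 1)"
  proof (intro exI conjI allI impI)
    fix n :: "nat \<Rightarrow> nat" and p :: "nat \<Rightarrow> real"
    assume h: "(\<forall>N. n N \<ge> 2) \<and> (\<forall>N. 0 \<le> p N \<and> p N \<le> 1 / real N) \<and>
        filterlim (\<lambda>N. p N * real N ^ 2) at_top sequentially"
    have xl: "filterlim (\<lambda>N. p N * real N ^ 2) at_top sequentially" using h by blast
    have ev1: "eventually (\<lambda>N. 0 < p N * real N ^ 2) sequentially"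
      using xl unfolding filterlim_at_top_dense by blast
    have ev2: "eventually (\<lambda>N. 175 \<le> N) sequentially" by (rule eventually_ge_at_top)
    show "(\<lambda>N. gnp_prob N (p N)
               (\<lambda>E. 1/15 * p N * real N ^ 2 \<le> real (ex_path E (n N + 1)) \<and>
                    real (ex_path E (n N + 1)) \<le> 1 * p N * real N ^ 2)) \<longlonglongrightarrow> 1"
    proof (rule limit_from_bound[OF xl, where K="?K"])
      show "eventually (\<lambda>N. 1 - ?K / (p N * real N ^ 2) \<le> gnp_prob N (p N)
               (\<lambda>E. 1/15 * p N * real N ^ 2 \<le> real (ex_path E (n N + 1)) \<and>
                    real (ex_path E (n N + 1)) \<le> 1 * p N * real N ^ 2) \<and>
             gnp_prob N (p N)
               (\<lambda>E. 1/15 * p N * real N ^ 2 \<le> real (ex_path E (n N + 1)) \<and>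
                    real (ex_path E (n N + 1)) \<le> 1 * p N * real N ^ 2) \<le> 1) sequentially"
        using ev1 ev2
      proof eventually_elim
        case (elim N)
        have pN: "0 \<le> p N" "p N \<le> 1 / real N" using h by auto
        have k: "3 \<le> n N + 1" using h by (metis add_le_mono1 numeral_2_eq_2 numeral_3_eq_3 Suc_eq_plus1)
        have "1 - ?K / (p N * real N ^ 2) \<le> gnp_prob N (p N)
               (\<lambda>E. p N * real N ^ 2 / 15 \<le> real (ex_path E (n N + 1)) \<and>
                    real (ex_path E (n N + 1)) \<le> p N * real N ^ 2)"
          by (rule main_fixed[OF elim(2) pN elim(1) k])
        moreover have "(\<lambda>E. p N * real N ^ 2 / 15 \<le> real (ex_path E (n N + 1)) \<and>
                    real (ex_path E (n N + 1)) \<le> p N * real N ^ 2) =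
              (\<lambda>E. 1/15 * p N * real N ^ 2 \<le> real (ex_path E (n N + 1)) \<and>
                    real (ex_path E (n N + 1)) \<le> 1 * p N * real N ^ 2)" by simp
        ultimately show ?case using prob_le1[OF pN(1) p_range[OF pN]] by simp
      qed
    qed
  qed auto
  show "\<forall>n :: nat \<Rightarrow> nat. (\<forall>N. n N \<ge> 2) \<longrightarrow>
      (\<lambda>N. gnp_prob N (1 / real N)
             (\<lambda>E. real (ex_path E (n N + 1)) \<ge> real N / 15))
        \<longlonglongrightarrow> 1"
  proof (intro allI impI)
    fix n :: "nat \<Rightarrow> nat" assume h: "\<forall>N. n N \<ge> 2"
    show "(\<lambda>N. gnp_prob N (1 / real N)
             (\<lambda>E. real (ex_path E (n N + 1)) \<ge> real N / 15)) \<longlonglongrightarrow> 1"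
    proof (rule limit_from_bound[OF filterlim_real_sequentially, where K="?K"])
      have ev2: "eventually (\<lambda>N. 175 \<le> N) sequentially" by (rule eventually_ge_at_top)
      show "eventually (\<lambda>N. 1 - ?K / real N \<le> gnp_prob N (1 / real N)
             (\<lambda>E. real (ex_path E (n N + 1)) \<ge> real N / 15) \<and>
             gnp_prob N (1 / real N)
             (\<lambda>E. real (ex_path E (n N + 1)) \<ge> real N / 15) \<le> 1) sequentially"
        using ev2
      proof eventually_elim
        case (elim N)
        have pN: "0 \<le> 1 / real N" "1 / real N \<le> 1 / real N" by auto
        have N0: "0 < real N" using elim by simp
        have xN: "1 / real N * real N ^ 2 = real N" using N0 by (simp add: power2_eq_square)
        have x0: "0 < 1 / real N * real N ^ 2" using xN N0 by simp
        have k: "3 \<le> n N + 1" using h by (metis add_le_mono1 numeral_2_eq_2 numeral_3_eq_3 Suc_eq_plus1)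
        have "1 - ?K / (1 / real N * real N ^ 2) \<le> gnp_prob N (1 / real N)
               (\<lambda>E. 1 / real N * real N ^ 2 / 15 \<le> real (ex_path E (n N + 1)) \<and>
                    real (ex_path E (n N + 1)) \<le> 1 / real N * real N ^ 2)"
          by (rule main_fixed[OF elim pN x0 k])
        also have "\<dots> \<le> gnp_prob N (1 / real N) (\<lambda>E. real (ex_path E (n N + 1)) \<ge> real N / 15)"
          by (rule prob_mono[OF pN(1) p_range[OF pN]]) (use xN in auto)
        finally have "1 - ?K / (1 / real N * real N ^ 2) \<le> gnp_prob N (1 / real N) (\<lambda>E. real (ex_path E (n N + 1)) \<ge> real N / 15)" .
        hence "1 - ?K / real N \<le> gnp_prob N (1 / real N) (\<lambda>E. real (ex_path E (n N + 1)) \<ge> real N / 15)"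
          by (simp only: xN)
        thus ?case using prob_le1[OF pN(1) p_range[OF pN]] by simp
      qed
    qed
  qed
qed


thm_deps proposition1p3

end
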